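(* Let $k\ge1$ and suppose $\delta\notin I_k=\{-\frac{p}{2(n+1)}:p\in\{k-1,\dots,2k-2\}\}$. Then the numbers $r(j,k-j)$, $1\le j\le k$, are nonzero, and the operator \[p_k:R^k\to R^k,\qquad p_k=\mathrm{Id}+\sum_{l=1}^kb_{k,l}\,X^l\circ i(\alpha)^l,\qquad b_{k,l}=\Big(\prod_{j=1}^l\big(-r(j,k-j)\big)\Big)^{-1},\] is a projector ($p_k^2=p_k$) whose image is $R^k\cap\ker i(\alpha)$; moreover $i(\alpha)\circ p_k=0$.
   Context: Let $n\ge1$, $M=\mathbb{R}^{2n+1}$ with coordinates $(q^1,\dots,q^n,p^1,\dots,p^n,t)$. For $\mu\in\mathbb{R}$, $\mathcal{S}^k_\mu$ denotes the space of smooth functions $S(x,\xi)$ on $M\times\mathbb{R}^{2n+1}$ homogeneous polynomial of degree $k$ in $\xi=(\xi_{q^1},\dots,\xi_{q^n},\xi_{p^1},\dots,\xi_{p^n},\xi_t)$. Fix $\delta\in\mathbb{R}$ and set $R^k=\mathcal{S}^k_{\delta+\frac{k}{n+1}}$ for $k\ge0$, $R^{j}=0$ for $j<0$. Let $E_s=\sum_i(p^i\partial_{p^i}+q^i\partial_{q^i})$, $\langle E_s,\xi\rangle=\sum_i(p^i\xi_{p^i}+q^i\xi_{q^i})$, $D(S)=\sum_i(\xi_{q^i}\partial_{p^i}S-\xi_{p^i}\partial_{q^i}S)+\xi_tE_s(S)-\langle E_s,\xi\rangle\partial_tS$. Operators: $i(\alpha):R^k\to R^{k-1}$, $i(\alpha)(S)=\frac12\big(\sum_i(p^i\partial_{\xi_{q^i}}S-q^i\partial_{\xi_{p^i}}S)-\partial_{\xi_t}S\big)$;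 $X:R^k\to R^{k+1}$, $X(S)=D(S)+(2(n+1)\delta+k)\xi_tS$. Set $r(l,k)=-\frac{l}{2}\big(2(n+1)\delta+2k+l-1\big)$. *)

theory Defs
  imports "HOL-Analysis.Analysis"
begin

text \<open>Coordinates on M = R^(2n+1) (and on the fibre R^(2n+1) of the cotangent directions)
  are indexed by the finite type  'n + 'n + unit :
  Inl j = q^j,  Inr (Inl j) = p^j,  Inr (Inr ()) = t,  with n = CARD('n).\<close>

type_synonym 'n pt = "real ^ ('n + 'n + unit)"

definition cq :: "'n \<Rightarrow> 'n + 'n + unit" where "cq j = Inl j"
definition cp :: "'n \<Rightarrow> 'n + 'n + unit" where "cp j = Inr (Inl j)"
definition ct :: "'n + 'n + unit" where "ct = Inr (Inr ())"

fun Ck :: "nat \<Rightarrow> ('a::real_normed_vector \<Rightarrow> real) \<Rightarrow> bool" where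
  "Ck 0 f = continuous_on UNIV f"
| "Ck (Suc m) f = ((\<forall>z. f differentiable (at z)) \<and>
                    (\<forall>v. Ck m (\<lambda>z. frechet_derivative f (at z) v)))"

definition smooth :: "('a::real_normed_vector \<Rightarrow> real) \<Rightarrow> bool" where
  "smooth f \<longleftrightarrow> (\<forall>m. Ck m f)"

definition hom_poly :: "nat \<Rightarrow> (real ^ 'i::finite \<Rightarrow> real) \<Rightarrow> bool" where
  "hom_poly k f \<longleftrightarrow> (\<exists>A c. finite A \<and> (\<forall>a\<in>A. (\<Sum>i\<in>UNIV. a i) = k) \<and>
       (\<forall>\<xi>. f \<xi> = (\<Sum>a\<in>A. c a * (\<Prod>i\<in>UNIV. (\<xi> $ i) ^ a i))))"

text \<open>The space S^k_mu (as a set of functions it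
  does not depend on the weight mu), hence R^k = S^k_{delta + k/(n+1)}, and R^j = 0 for j<0
  (the latter is never needed below since all degrees are natural numbers).\<close>
definition Rsp :: "nat \<Rightarrow> ('n::finite pt \<Rightarrow> 'n pt \<Rightarrow> real) set" where
  "Rsp k = {S. smooth (\<lambda>(x, \<xi>). S x \<xi>) \<and> (\<forall>x. hom_poly k (S x))}"

definition dx :: "('n::finite pt \<Rightarrow> 'n pt \<Rightarrow> real) \<Rightarrow> ('n + 'n + unit) \<Rightarrow> 'n pt \<Rightarrow> 'n pt \<Rightarrow> real" where
  "dx S i x \<xi> = deriv (\<lambda>h. S (x + h *\<^sub>R axis i 1) \<xi>) 0"

definition dxi :: "('n::finite pt \<Rightarrow> 'n pt \<Rightarrow> real) \<Rightarrow> ('n + 'n + unit) \<Rightarrow> 'n pt \<Rightarrow> 'n pt \<Rightarrow> real" where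
  "dxi S i x \<xi> = deriv (\<lambda>h. S x (\<xi> + h *\<^sub>R axis i 1)) 0"

definition Es :: "('n::finite pt \<Rightarrow> 'n pt \<Rightarrow> real) \<Rightarrow> 'n pt \<Rightarrow> 'n pt \<Rightarrow> real" where
  "Es S x \<xi> = (\<Sum>j\<in>UNIV. x $ cp j * dx S (cp j) x \<xi> + x $ cq j * dx S (cq j) x \<xi>)"

definition Es_xi :: "'n::finite pt \<Rightarrow> 'n pt \<Rightarrow> real" where
  "Es_xi x \<xi> = (\<Sum>j\<in>UNIV. x $ cp j * \<xi> $ cp j + x $ cq j * \<xi> $ cq j)"

definition Dop :: "('n::finite pt \<Rightarrow> 'n pt \<Rightarrow> real) \<Rightarrow> 'n pt \<Rightarrow> 'n pt \<Rightarrow> real" where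
  "Dop S x \<xi> = (\<Sum>j\<in>UNIV. \<xi> $ cq j * dx S (cp j) x \<xi> - \<xi> $ cp j * dx S (cq j) x \<xi>)
               + \<xi> $ ct * Es S x \<xi> - Es_xi x \<xi> * dx S ct x \<xi>"

definition ialpha :: "('n::finite pt \<Rightarrow> 'n pt \<Rightarrow> real) \<Rightarrow> 'n pt \<Rightarrow> 'n pt \<Rightarrow> real" where
  "ialpha S x \<xi> = (1/2) * ((\<Sum>j\<in>UNIV. x $ cp j * dxi S (cq j) x \<xi> - x $ cq j * dxi S (cp j) x \<xi>)
                           - dxi S ct x \<xi>)"

text \<open>X : R^k -> R^(k+1), X(S) = D(S) + (2(n+1)delta + k) xi_t S; k is the degree of the input.\<close>
definition Xop :: "real \<Rightarrow> nat \<Rightarrow> ('n::finite pt \<Rightarrow> 'n pt \<Rightarrow> real) \<Rightarrow> 'n pt \<Rightarrow> 'n pt \<Rightarrow> real" where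
  "Xop \<delta> k S x \<xi> = Dop S x \<xi> + (2 * (real CARD('n) + 1) * \<delta> + real k) * \<xi> $ ct * S x \<xi>"

text \<open>X^l applied to an element of R^m: X_(m+l-1) o ... o X_(m+1) o X_m.\<close>
fun Xpow :: "real \<Rightarrow> nat \<Rightarrow> nat \<Rightarrow> ('n::finite pt \<Rightarrow> 'n pt \<Rightarrow> real) \<Rightarrow> 'n pt \<Rightarrow> 'n pt \<Rightarrow> real" where
  "Xpow \<delta> m 0 S = S"
| "Xpow \<delta> m (Suc l) S = Xop \<delta> (m + l) (Xpow \<delta> m l S)"

definition rr :: "nat \<Rightarrow> real \<Rightarrow> real \<Rightarrow> real \<Rightarrow> real" where
  "rr n \<delta> l k = - (l / 2) * (2 * (real n + 1) * \<delta> + 2 * k + l - 1)"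

definition bb :: "nat \<Rightarrow> real \<Rightarrow> nat \<Rightarrow> nat \<Rightarrow> real" where
  "bb n \<delta> k l = inverse (\<Prod>j\<in>{1..l}. - rr n \<delta> (real j) (real k - real j))"

definition pk :: "real \<Rightarrow> nat \<Rightarrow> ('n::finite pt \<Rightarrow> 'n pt \<Rightarrow> real) \<Rightarrow> 'n pt \<Rightarrow> 'n pt \<Rightarrow> real" where
  "pk \<delta> k S x \<xi> = S x \<xi> + (\<Sum>l\<in>{1..k}. bb CARD('n) \<delta> k l *
        Xpow \<delta> (k - l) l ((ialpha ^^ l) S) x \<xi>)"

end

theory Submission
  imports Defs
begin


lemma frechet_add:
  assumes "f differentiable (at z)" "g differentiable (at z)"
  shows "frechet_derivative (\<lambda>z. f z + g z) (at z) = (\<lambda>v. frechet_derivative f (at z) v + frechet_derivative g (at z) v)"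
proof -
  have "((\<lambda>z. f z + g z) has_derivative (\<lambda>v. frechet_derivative f (at z) v + frechet_derivative g (at z) v)) (at z)"
    using assms by (intro has_derivative_add) (simp_all add: frechet_derivative_works)
  then show ?thesis by (rule frechet_derivative_at[symmetric])
qed

lemma frechet_mult:
  fixes f g :: "'a::real_normed_vector \<Rightarrow> real"
  assumes "f differentiable (at z)" "g differentiable (at z)"
  shows "frechet_derivative (\<lambda>z. f z * g z) (at z) = (\<lambda>v. f z * frechet_derivative g (at z) v + frechet_derivative f (at z) v * g z)"
proof -
  have "((\<lambda>z. f z * g z) has_derivative (\<lambda>v. f z * frechet_derivative g (at z) v + frechet_derivative f (at z) v * g z)) (at z)"
    using assms by (intro has_derivative_mult) (simp_all add: frechet_derivative_works)
  then show ?thesis by (rule frechet_derivative_at[symmetric])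
qed

lemma Ck_Suc_imp: "Ck (Suc m) f \<Longrightarrow> Ck m f"
proof (induction m arbitrary: f)
  case 0
  then show ?case
    by (auto intro!: continuous_at_imp_continuous_on differentiable_imp_continuous_within)
next
  case (Suc m)
  from Suc.prems have "\<forall>z. f differentiable (at z)" "\<forall>v. Ck (Suc m) (\<lambda>z. frechet_derivative f (at z) v)" by auto
  then show ?case using Suc.IH by auto
qed

lemma Ck_const: "Ck m (\<lambda>z. c)"
  by (induction m arbitrary: c) auto

lemma Ck_linear: "bounded_linear L \<Longrightarrow> Ck m L"
proof (induction m)
  case 0
  then show ?case by (simp add: linear_continuous_on)
next
  case (Suc m)
  have d: "\<And>z. (L has_derivative L) (at z)" using Suc.prems by (rule bounded_linear_imp_has_derivative)
  then have "\<And>z. frechet_derivative L (at z) = L" by (metis frechet_derivative_at)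
  then show ?case using d by (auto simp: differentiable_def Ck_const)
qed

lemma Ck_add: "Ck m f \<Longrightarrow> Ck m g \<Longrightarrow> Ck m (\<lambda>z. f z + g z)"
proof (induction m arbitrary: f g)
  case 0
  then show ?case by (auto intro: continuous_intros)
next
  case (Suc m)
  then show ?case by (auto simp: frechet_add)
qed

lemma Ck_mult: "Ck m f \<Longrightarrow> Ck m g \<Longrightarrow> Ck m (\<lambda>z. f z * g z :: real)"
proof (induction m arbitrary: f g)
  case 0
  then show ?case by (auto intro: continuous_intros)
next
  case (Suc m)
  have "Ck m f" "Ck m g" using Suc.prems Ck_Suc_imp by blast+
  then show ?case using Suc by (auto simp: frechet_mult intro!: Ck_add Suc.IH)
qed

lemma smooth_const: "smooth (\<lambda>z. c)" by (simp add: smooth_def Ck_const)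
lemma smooth_linear: "bounded_linear L \<Longrightarrow> smooth L" by (simp add: smooth_def Ck_linear)
lemma smooth_add: "smooth f \<Longrightarrow> smooth g \<Longrightarrow> smooth (\<lambda>z. f z + g z)" by (simp add: smooth_def Ck_add)
lemma smooth_mult: "smooth f \<Longrightarrow> smooth g \<Longrightarrow> smooth (\<lambda>z. f z * g z :: real)" by (simp add: smooth_def Ck_mult)
lemma smooth_minus: "smooth f \<Longrightarrow> smooth (\<lambda>z. - f z :: real)"
  using smooth_mult[OF smooth_const[of "-1"], of f] by simp
lemma smooth_diff: "smooth f \<Longrightarrow> smooth g \<Longrightarrow> smooth (\<lambda>z. f z - g z :: real)"
  using smooth_add[OF _ smooth_minus, of f g] by simp
lemma smooth_sum: "finite I \<Longrightarrow> (\<And>i. i \<in> I \<Longrightarrow> smooth (f i)) \<Longrightarrow> smooth (\<lambda>z. \<Sum>i\<in>I. f i z :: real)"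
  by (induction I rule: finite_induct) (auto intro: smooth_add smooth_const)
lemma smooth_frechet: "smooth f \<Longrightarrow> smooth (\<lambda>z. frechet_derivative f (at z) v)"
  unfolding smooth_def by (metis Ck.simps(2))
lemma smooth_differentiable: "smooth f \<Longrightarrow> f differentiable (at z)"
  by (auto simp: smooth_def dest: spec[of _ "Suc 0"])


definition sm :: "('n::finite pt \<Rightarrow> 'n pt \<Rightarrow> real) \<Rightarrow> bool" where
  "sm S \<longleftrightarrow> smooth (\<lambda>z. S (fst z) (snd z))"

definition FD :: "('n::finite pt \<Rightarrow> 'n pt \<Rightarrow> real) \<Rightarrow> 'n pt \<Rightarrow> 'n pt \<Rightarrow> 'n pt \<times> 'n pt \<Rightarrow> real" where
  "FD S x \<xi> = frechet_derivative (\<lambda>z. S (fst z) (snd z)) (at (x, \<xi>))"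

lemma line_deriv:
  assumes "sm S"
  shows "((\<lambda>h. S (x + h *\<^sub>R v) (\<xi> + h *\<^sub>R w)) has_real_derivative FD S x \<xi> (v, w)) (at 0)"
proof -
  let ?F = "\<lambda>z. S (fst z) (snd z)"
  let ?g = "\<lambda>h::real. (x + h *\<^sub>R v, \<xi> + h *\<^sub>R w)"
  have dF: "(?F has_derivative FD S x \<xi>) (at (x, \<xi>))"
    using smooth_differentiable[OF assms[unfolded sm_def]] unfolding FD_def
    by (simp add: frechet_derivative_works)
  have lin: "linear (FD S x \<xi>)" using dF has_derivative_linear by blast
  have dg: "(?g has_derivative (\<lambda>h. (h *\<^sub>R v, h *\<^sub>R w))) (at 0)"
    by (auto intro!: derivative_eq_intros)
  have "?g 0 = (x, \<xi>)" by simp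
  then have "((?F \<circ> ?g) has_derivative (FD S x \<xi> \<circ> (\<lambda>h. (h *\<^sub>R v, h *\<^sub>R w)))) (at 0)"
    using diff_chain_at[OF dg] dF by simp
  moreover have "\<And>h. FD S x \<xi> (h *\<^sub>R v, h *\<^sub>R w) = FD S x \<xi> (v, w) * h"
    using linear_scale[OF lin, of _ "(v, w)"] by (simp add: mult.commute)
  ultimately show ?thesis by (simp add: has_field_derivative_def o_def)
qed

lemma dx_FD: "sm S \<Longrightarrow> dx S i x \<xi> = FD S x \<xi> (axis i 1, 0)"
  unfolding dx_def using line_deriv[of S x "axis i 1" \<xi> 0] by (simp add: DERIV_imp_deriv)

lemma dxi_FD: "sm S \<Longrightarrow> dxi S i x \<xi> = FD S x \<xi> (0, axis i 1)"
  unfolding dxi_def using line_deriv[of S x 0 \<xi> "axis i 1"] by (simp add: DERIV_imp_deriv)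

lemma dx_DERIV: "sm S \<Longrightarrow> ((\<lambda>h. S (x + h *\<^sub>R axis i 1) \<xi>) has_real_derivative dx S i x \<xi>) (at 0)"
  using line_deriv[of S x "axis i 1" \<xi> 0] by (simp add: dx_FD)

lemma dxi_DERIV: "sm S \<Longrightarrow> ((\<lambda>h. S x (\<xi> + h *\<^sub>R axis i 1)) has_real_derivative dxi S i x \<xi>) (at 0)"
  using line_deriv[of S x 0 \<xi> "axis i 1"] by (simp add: dxi_FD)

lemma sm_dx: "sm S \<Longrightarrow> sm (dx S i)"
proof -
  assume a: "sm S"
  have "(\<lambda>z. dx S i (fst z) (snd z)) = (\<lambda>z. frechet_derivative (\<lambda>z. S (fst z) (snd z)) (at z) (axis i 1, 0))"
    using a by (simp add: dx_FD FD_def)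
  then show ?thesis using a unfolding sm_def by (simp add: smooth_frechet)
qed

lemma sm_dxi: "sm S \<Longrightarrow> sm (dxi S i)"
proof -
  assume a: "sm S"
  have "(\<lambda>z. dxi S i (fst z) (snd z)) = (\<lambda>z. frechet_derivative (\<lambda>z. S (fst z) (snd z)) (at z) (0, axis i 1))"
    using a by (simp add: dxi_FD FD_def)
  then show ?thesis using a unfolding sm_def by (simp add: smooth_frechet)
qed

lemma sm_const: "sm (\<lambda>x \<xi>. c)" by (simp add: sm_def smooth_const)
lemma sm_add: "sm S \<Longrightarrow> sm T \<Longrightarrow> sm (\<lambda>x \<xi>. S x \<xi> + T x \<xi>)"
  unfolding sm_def by (rule smooth_add)
lemma sm_diff: "sm S \<Longrightarrow> sm T \<Longrightarrow> sm (\<lambda>x \<xi>. S x \<xi> - T x \<xi>)"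
  unfolding sm_def by (rule smooth_diff)
lemma sm_mult: "sm S \<Longrightarrow> sm T \<Longrightarrow> sm (\<lambda>x \<xi>. S x \<xi> * T x \<xi>)"
  unfolding sm_def by (rule smooth_mult)
lemma sm_sum: "finite I \<Longrightarrow> (\<And>i. i \<in> I \<Longrightarrow> sm (S i)) \<Longrightarrow> sm (\<lambda>x \<xi>. \<Sum>i\<in>I. S i x \<xi>)"
  unfolding sm_def by (rule smooth_sum)
lemma sm_x: "sm (\<lambda>x \<xi>. x $ a)"
  unfolding sm_def by (rule smooth_linear) (rule bounded_linear_compose[OF bounded_linear_vec_nth bounded_linear_fst])
lemma sm_xi: "sm (\<lambda>x \<xi>. \<xi> $ a)"
  unfolding sm_def by (rule smooth_linear) (rule bounded_linear_compose[OF bounded_linear_vec_nth bounded_linear_snd])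

lemma Rsp_iff: "S \<in> Rsp k \<longleftrightarrow> sm S \<and> (\<forall>x. hom_poly k (S x))"
  by (simp add: Rsp_def sm_def case_prod_unfold)


definition mon :: "('i::finite \<Rightarrow> nat) \<Rightarrow> real ^ 'i \<Rightarrow> real" where
  "mon a \<xi> = (\<Prod>i\<in>UNIV. (\<xi> $ i) ^ a i)"

definition dlt :: "'i \<Rightarrow> 'i \<Rightarrow> nat" where
  "dlt j i = (if i = j then 1 else 0)"

definition pd :: "(real ^ 'i::finite \<Rightarrow> real) \<Rightarrow> 'i \<Rightarrow> real ^ 'i \<Rightarrow> real" where
  "pd f j \<xi> = deriv (\<lambda>h. f (\<xi> + h *\<^sub>R axis j 1)) 0"

lemma hom_poly_E:
  assumes "hom_poly k f"
  obtains A c where "finite A" "\<And>a. a \<in> A \<Longrightarrow> sum a UNIV = k" "\<And>\<xi>. f \<xi> = (\<Sum>a\<in>A. c a * mon a \<xi>)"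
  using assms unfolding hom_poly_def mon_def by blast

lemma hom_poly_gen:
  fixes e :: "'b \<Rightarrow> 'i::finite \<Rightarrow> nat"
  assumes B: "finite B" and deg: "\<And>b. b \<in> B \<Longrightarrow> c b \<noteq> 0 \<Longrightarrow> sum (e b) UNIV = k"
    and f: "\<And>\<xi>. f \<xi> = (\<Sum>b\<in>B. c b * mon (e b) \<xi>)"
  shows "hom_poly k f"
proof -
  define B' where "B' = {b\<in>B. c b \<noteq> 0}"
  have fB': "finite B'" using B by (simp add: B'_def)
  define c' where "c' a = (\<Sum>b\<in>{b\<in>B'. e b = a}. c b)" for a
  have "f \<xi> = (\<Sum>a\<in>e ` B'. c' a * mon a \<xi>)" for \<xi>
  proof -
    have "f \<xi> = (\<Sum>b\<in>B'. c b * mon (e b) \<xi>)"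
      unfolding f B'_def using B by (intro sum.mono_neutral_cong_right) auto
    also have "\<dots> = (\<Sum>a\<in>e ` B'. \<Sum>b\<in>{b\<in>B'. e b = a}. c b * mon (e b) \<xi>)"
      using fB' by (rule sum.image_gen)
    also have "\<dots> = (\<Sum>a\<in>e ` B'. c' a * mon a \<xi>)"
      unfolding c'_def sum_distrib_right by (intro sum.cong refl) auto
    finally show ?thesis .
  qed
  moreover have "\<forall>a\<in>e ` B'. sum a UNIV = k" using deg by (auto simp: B'_def)
  ultimately show ?thesis unfolding hom_poly_def mon_def using fB'
    by (intro exI[of _ "e ` B'"] exI[of _ c']) auto
qed

lemma comp_axis: "(\<xi> + h *\<^sub>R axis j 1) $ i = \<xi> $ i + (if i = j then h else 0)"
  by (simp add: axis_def)

lemma mon_split: "mon a \<xi> = \<xi> $ j ^ a j * (\<Prod>i\<in>UNIV-{j}. (\<xi> $ i) ^ a i)"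
  unfolding mon_def by (simp add: prod.remove)

lemma mon_DERIV:
  "((\<lambda>h. mon a (\<xi> + h *\<^sub>R axis j 1)) has_real_derivative real (a j) * mon (\<lambda>i. a i - dlt j i) \<xi>) (at 0)"
proof -
  define P where "P = (\<Prod>i\<in>UNIV-{j}. (\<xi> $ i) ^ a i)"
  have e1: "mon a (\<xi> + h *\<^sub>R axis j 1) = (\<xi> $ j + h) ^ a j * P" for h
  proof -
    have "(\<Prod>i\<in>UNIV-{j}. ((\<xi> + h *\<^sub>R axis j 1) $ i) ^ a i) = P"
      unfolding P_def by (intro prod.cong) (auto simp: axis_def)
    then show ?thesis unfolding mon_split[of _ _ j] by (simp add: axis_def)
  qed
  have e2: "mon (\<lambda>i. a i - dlt j i) \<xi> = \<xi> $ j ^ (a j - 1) * P"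
    unfolding mon_split[of _ _ j] P_def by (auto simp: dlt_def intro!: prod.cong)
  have "((\<lambda>h. (\<xi> $ j + h) ^ a j * P) has_real_derivative real (a j) * (\<xi> $ j + 0) ^ (a j - 1) * 1 * P) (at 0)"
    by (intro derivative_eq_intros) auto
  then show ?thesis unfolding e1 e2 by (simp add: mult.assoc)
qed

lemma poly_DERIV:
  assumes "finite B"
  shows "((\<lambda>h. \<Sum>b\<in>B. c b * mon (e b) (\<xi> + h *\<^sub>R axis j 1)) has_real_derivative
          (\<Sum>b\<in>B. c b * (real (e b j) * mon (\<lambda>i. e b i - dlt j i) \<xi>))) (at 0)"
  by (intro DERIV_sum DERIV_cmult mon_DERIV)

lemma pd_rep:
  assumes "finite B" "\<And>\<xi>. f \<xi> = (\<Sum>b\<in>B. c b * mon (e b) \<xi>)"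
  shows "pd f j = (\<lambda>\<xi>. \<Sum>b\<in>B. (c b * real (e b j)) * mon (\<lambda>i. e b i - dlt j i) \<xi>)"
    and "((\<lambda>h. f (\<xi> + h *\<^sub>R axis j 1)) has_real_derivative pd f j \<xi>) (at 0)"
proof -
  have D: "((\<lambda>h. f (\<xi> + h *\<^sub>R axis j 1)) has_real_derivative
          (\<Sum>b\<in>B. c b * (real (e b j) * mon (\<lambda>i. e b i - dlt j i) \<xi>))) (at 0)" for \<xi>
    unfolding assms(2) using poly_DERIV[OF assms(1)] .
  show "pd f j = (\<lambda>\<xi>. \<Sum>b\<in>B. (c b * real (e b j)) * mon (\<lambda>i. e b i - dlt j i) \<xi>)"
    by (rule ext) (simp add: pd_def DERIV_imp_deriv[OF D] mult.assoc)
  then show "((\<lambda>h. f (\<xi> + h *\<^sub>R axis j 1)) has_real_derivative pd f j \<xi>) (at 0)"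
    using D by (simp add: mult.assoc)
qed

lemma sum_minus_dlt: "1 \<le> (a::'i::finite \<Rightarrow> nat) j \<Longrightarrow> sum (\<lambda>i. a i - dlt j i) UNIV = sum a UNIV - (1::nat)"
proof -
  assume h: "1 \<le> a j"
  have "sum (\<lambda>i. a i - dlt j i) UNIV = (a j - 1) + sum (\<lambda>i. a i - dlt j i) (UNIV - {j})"
    by (subst sum.remove[of UNIV j]) (auto simp: dlt_def)
  also have "sum (\<lambda>i. a i - dlt j i) (UNIV - {j}) = sum a (UNIV - {j})"
    by (intro sum.cong) (auto simp: dlt_def)
  also have "sum a UNIV = a j + sum a (UNIV - {j})" by (simp add: sum.remove)
  ultimately show ?thesis using h by simp
qed

lemma hom_poly_DERIV: "hom_poly k f \<Longrightarrow> ((\<lambda>h. f (\<xi> + h *\<^sub>R axis j 1)) has_real_derivative pd f j \<xi>) (at 0)"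
  by (erule hom_poly_E) (rule pd_rep(2))

lemma hom_poly_pd: "hom_poly k f \<Longrightarrow> hom_poly (k - 1) (pd f j)"
proof (erule hom_poly_E)
  fix A c assume A: "finite A" "\<And>a. a \<in> A \<Longrightarrow> sum a UNIV = k" "\<And>\<xi>. f \<xi> = (\<Sum>a\<in>A. c a * mon a \<xi>)"
  show "hom_poly (k - 1) (pd f j)"
  proof (rule hom_poly_gen[OF A(1)])
    fix a assume "a \<in> A" "c a * real (a j) \<noteq> 0"
    then show "sum (\<lambda>i. a i - dlt j i) UNIV = k - 1" using A(2) sum_minus_dlt[of a j] by simp
  next
    fix \<xi> show "pd f j \<xi> = (\<Sum>a\<in>A. (c a * real (a j)) * mon (\<lambda>i. a i - dlt j i) \<xi>)"
      using pd_rep(1)[OF A(1) A(3), of j] by simp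
  qed
qed

lemma mon_euler_term: "\<xi> $ l * (real (a l) * mon (\<lambda>i. a i - dlt l i) \<xi>) = real (a l) * mon a \<xi>"
proof (cases "a l = 0")
  case False
  define P where "P = (\<Prod>i\<in>UNIV-{l}. (\<xi> $ i) ^ a i)"
  have e2: "mon (\<lambda>i. a i - dlt l i) \<xi> = \<xi> $ l ^ (a l - 1) * P"
    unfolding mon_split[of _ _ l] P_def by (auto simp: dlt_def intro!: prod.cong)
  have e1: "mon a \<xi> = \<xi> $ l ^ a l * P" unfolding mon_split[of _ _ l] P_def ..
  have "\<xi> $ l * \<xi> $ l ^ (a l - 1) = \<xi> $ l ^ a l" using False
    by (metis power_eq_if)
  then show ?thesis unfolding e1 e2 by (metis mult.assoc mult.left_commute)
qed simp

lemma hom_poly_euler: "hom_poly k f \<Longrightarrow> (\<Sum>l\<in>UNIV. \<xi> $ l * pd f l \<xi>) = real k * f \<xi>"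
proof (erule hom_poly_E)
  fix A c assume A: "finite A" "\<And>a. a \<in> A \<Longrightarrow> sum a UNIV = k" "\<And>\<xi>. f \<xi> = (\<Sum>a\<in>A. c a * mon a \<xi>)"
  have "(\<Sum>l\<in>UNIV. \<xi> $ l * pd f l \<xi>) = (\<Sum>l\<in>UNIV. \<Sum>a\<in>A. c a * (\<xi> $ l * (real (a l) * mon (\<lambda>i. a i - dlt l i) \<xi>)))"
    unfolding pd_rep(1)[OF A(1) A(3)] by (simp add: sum_distrib_left algebra_simps)
  also have "\<dots> = (\<Sum>l\<in>UNIV. \<Sum>a\<in>A. c a * (real (a l) * mon a \<xi>))"
    by (simp add: mon_euler_term)
  also have "\<dots> = (\<Sum>a\<in>A. c a * (real (sum a UNIV)) * mon a \<xi>)"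
    by (subst sum.swap) (simp add: sum_distrib_left sum_distrib_right algebra_simps)
  also have "\<dots> = real k * f \<xi>"
    using A(2) by (simp add: A(3) sum_distrib_left algebra_simps)
  finally show ?thesis .
qed

lemma hom_poly_sym: "hom_poly k f \<Longrightarrow> pd (pd f j) l \<xi> = pd (pd f l) j \<xi>"
proof (erule hom_poly_E)
  fix A c assume A: "finite A" "\<And>a. a \<in> A \<Longrightarrow> sum a UNIV = k" "\<And>\<xi>. f \<xi> = (\<Sum>a\<in>A. c a * mon a \<xi>)"
  have pj: "\<And>\<xi>. pd f j \<xi> = (\<Sum>a\<in>A. (c a * real (a j)) * mon (\<lambda>i. a i - dlt j i) \<xi>)"
    using pd_rep(1)[OF A(1) A(3)] by simp
  have pl: "\<And>\<xi>. pd f l \<xi> = (\<Sum>a\<in>A. (c a * real (a l)) * mon (\<lambda>i. a i - dlt l i) \<xi>)"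
    using pd_rep(1)[OF A(1) A(3)] by simp
  have 1: "pd (pd f j) l \<xi> = (\<Sum>a\<in>A. (c a * real (a j) * real (a l - dlt j l)) * mon (\<lambda>i. (a i - dlt j i) - dlt l i) \<xi>)"
    by (subst pd_rep(1)[OF A(1) pj]) simp
  have 2: "pd (pd f l) j \<xi> = (\<Sum>a\<in>A. (c a * real (a l) * real (a j - dlt l j)) * mon (\<lambda>i. (a i - dlt l i) - dlt j i) \<xi>)"
    by (subst pd_rep(1)[OF A(1) pl]) simp
  show ?thesis unfolding 1 2
  proof (intro sum.cong refl)
    fix a
    show "(c a * real (a j) * real (a l - dlt j l)) * mon (\<lambda>i. (a i - dlt j i) - dlt l i) \<xi> =
          (c a * real (a l) * real (a j - dlt l j)) * mon (\<lambda>i. (a i - dlt l i) - dlt j i) \<xi>"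
      by (cases "j = l") (auto simp: dlt_def diff_commute add.commute)
  qed
qed

lemma hom_poly0: "hom_poly 0 f \<Longrightarrow> f \<xi> = f \<eta>"
proof (erule hom_poly_E)
  fix A c assume A: "finite A" "\<And>a. a \<in> A \<Longrightarrow> sum a UNIV = 0" "\<And>\<xi>. f \<xi> = (\<Sum>a\<in>A. c a * mon a \<xi>)"
  have "\<And>a \<xi>. a \<in> A \<Longrightarrow> mon a \<xi> = 1"
  proof -
    fix a \<xi> assume "a \<in> A"
    then have "a = (\<lambda>_. 0)" using A(2) by auto
    then show "mon a \<xi> = 1" by (simp add: mon_def)
  qed
  then show ?thesis unfolding A(3) by simp
qed

lemma hom_poly_zero: "hom_poly k (\<lambda>\<xi>. 0)"
  unfolding hom_poly_def by (intro exI[of _ "{}"]) auto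

lemma mon_zero[simp]: "mon (\<lambda>_. 0) \<xi> = 1" by (simp add: mon_def)

lemma hom_poly_const: "hom_poly 0 (\<lambda>\<xi>. r)"
  by (rule hom_poly_gen[of "{()}" "\<lambda>_. r" "\<lambda>_ _. 0"]) (auto simp: mon_def)

lemma hom_poly_lin:
  assumes "hom_poly k f" "hom_poly k g"
  shows "hom_poly k (\<lambda>\<xi>. r * f \<xi> + s * g \<xi>)"
proof -
  obtain A c where A: "finite A" "\<And>a. a \<in> A \<Longrightarrow> sum a UNIV = k" "\<And>\<xi>. f \<xi> = (\<Sum>a\<in>A. c a * mon a \<xi>)"
    using hom_poly_E[OF assms(1)] by blast
  obtain B d where B: "finite B" "\<And>a. a \<in> B \<Longrightarrow> sum a UNIV = k" "\<And>\<xi>. g \<xi> = (\<Sum>a\<in>B. d a * mon a \<xi>)"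
    using hom_poly_E[OF assms(2)] by blast
  show ?thesis
  proof (rule hom_poly_gen[where B="A <+> B" and c="case_sum (\<lambda>a. r * c a) (\<lambda>a. s * d a)" and e="case_sum id id"])
    show "finite (A <+> B)" using A B by simp
    show "\<And>b. b \<in> A <+> B \<Longrightarrow> case_sum (\<lambda>a. r * c a) (\<lambda>a. s * d a) b \<noteq> 0 \<Longrightarrow> sum (case_sum id id b) UNIV = k"
      using A(2) B(2) by auto
    show "\<And>\<xi>. r * f \<xi> + s * g \<xi> = (\<Sum>b\<in>A <+> B. case_sum (\<lambda>a. r * c a) (\<lambda>a. s * d a) b * mon (case_sum id id b) \<xi>)"
      using A B by (simp add: sum.Plus sum_distrib_left mult.assoc)
  qed
qed

lemma hom_poly_add: "hom_poly k f \<Longrightarrow> hom_poly k g \<Longrightarrow> hom_poly k (\<lambda>\<xi>. f \<xi> + g \<xi>)"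
  using hom_poly_lin[of k f g 1 1] by simp
lemma hom_poly_diff: "hom_poly k f \<Longrightarrow> hom_poly k g \<Longrightarrow> hom_poly k (\<lambda>\<xi>. f \<xi> - g \<xi>)"
  using hom_poly_lin[of k f g 1 "-1"] by simp
lemma hom_poly_cmult: "hom_poly k f \<Longrightarrow> hom_poly k (\<lambda>\<xi>. r * f \<xi>)"
  using hom_poly_lin[of k f f r 0] by simp

lemma hom_poly_sum: "finite I \<Longrightarrow> (\<And>i. i \<in> I \<Longrightarrow> hom_poly k (f i)) \<Longrightarrow> hom_poly k (\<lambda>\<xi>. \<Sum>i\<in>I. f i \<xi>)"
  by (induction I rule: finite_induct) (auto intro: hom_poly_add hom_poly_zero)

lemma mon_plus_dlt: "mon (\<lambda>i. a i + dlt l i) \<xi> = \<xi> $ l * mon a \<xi>"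
proof -
  have "(\<Prod>i\<in>UNIV-{l}. (\<xi> $ i) ^ (a i + dlt l i)) = (\<Prod>i\<in>UNIV-{l}. (\<xi> $ i) ^ a i)"
    by (intro prod.cong) (auto simp: dlt_def)
  then show ?thesis unfolding mon_split[of _ _ l] by (simp add: dlt_def)
qed

lemma hom_poly_xi: "hom_poly k f \<Longrightarrow> hom_poly (Suc k) (\<lambda>\<xi>. \<xi> $ l * f \<xi>)"
proof (erule hom_poly_E)
  fix A c assume A: "finite A" "\<And>a. a \<in> A \<Longrightarrow> sum a UNIV = k" "\<And>\<xi>. f \<xi> = (\<Sum>a\<in>A. c a * mon a \<xi>)"
  show ?thesis
  proof (rule hom_poly_gen[OF A(1), where c=c and e="\<lambda>a i. a i + dlt l i"])
    show "\<And>b. b \<in> A \<Longrightarrow> c b \<noteq> 0 \<Longrightarrow> (\<Sum>i\<in>UNIV. b i + dlt l i) = Suc k"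
      using A(2) by (simp add: sum.distrib dlt_def)
    show "\<And>\<xi>. \<xi> $ l * f \<xi> = (\<Sum>b\<in>A. c b * mon (\<lambda>i. b i + dlt l i) \<xi>)"
      by (simp add: A(3) mon_plus_dlt sum_distrib_left algebra_simps)
  qed
qed


lemma dxi_pd: "dxi S i x = pd (S x) i"
  by (rule ext) (simp add: dxi_def pd_def)

lemma comp_DERIV: "((\<lambda>h. (\<xi> + h *\<^sub>R v) $ j) has_real_derivative v $ j) (at t)"
  by (auto intro!: derivative_eq_intros)

lemma DERIV_eqI: "(f has_real_derivative D) F \<Longrightarrow> D = E \<Longrightarrow> (f has_real_derivative E) F"
  by simp

lemma Rsp_sm: "S \<in> Rsp k \<Longrightarrow> sm S" by (simp add: Rsp_iff)
lemma Rsp_hp: "S \<in> Rsp k \<Longrightarrow> hom_poly k (S x)" by (simp add: Rsp_iff)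

lemma Rsp_dxi: "S \<in> Rsp k \<Longrightarrow> dxi S i \<in> Rsp (k - 1)"
  by (metis Rsp_iff sm_dxi dxi_pd hom_poly_pd)

lemma Rsp_euler: "S \<in> Rsp k \<Longrightarrow> (\<Sum>l\<in>UNIV. \<xi> $ l * dxi S l x \<xi>) = real k * S x \<xi>"
  by (simp add: Rsp_iff dxi_pd hom_poly_euler)

lemma Rsp0: "S \<in> Rsp 0 \<Longrightarrow> S x \<xi> = S x \<eta>"
  by (simp add: Rsp_iff hom_poly0[of "S x"])

lemma Rsp_sym: "S \<in> Rsp k \<Longrightarrow> dxi (dxi S j) l x \<xi> = dxi (dxi S l) j x \<xi>"
proof -
  assume "S \<in> Rsp k"
  then have "hom_poly k (S x)" by (simp add: Rsp_iff)
  moreover have "dxi (dxi S j) l x = pd (pd (S x) j) l" "dxi (dxi S l) j x = pd (pd (S x) l) j"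
    by (simp_all add: dxi_pd)
  ultimately show ?thesis using hom_poly_sym by metis
qed

lemma Rsp_zero: "(\<lambda>x \<xi>. 0) \<in> Rsp k"
  by (simp add: Rsp_iff sm_const hom_poly_zero)

lemma Rsp_lin: "S \<in> Rsp k \<Longrightarrow> T \<in> Rsp k \<Longrightarrow> (\<lambda>x \<xi>. r * S x \<xi> + s * T x \<xi>) \<in> Rsp k"
  by (simp add: Rsp_iff hom_poly_lin sm_add sm_mult sm_const)

lemma Rsp_add: "S \<in> Rsp k \<Longrightarrow> T \<in> Rsp k \<Longrightarrow> (\<lambda>x \<xi>. S x \<xi> + T x \<xi>) \<in> Rsp k"
  using Rsp_lin[of S k T 1 1] by simp
lemma Rsp_diff: "S \<in> Rsp k \<Longrightarrow> T \<in> Rsp k \<Longrightarrow> (\<lambda>x \<xi>. S x \<xi> - T x \<xi>) \<in> Rsp k"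
  using Rsp_lin[of S k T 1 "-1"] by simp
lemma Rsp_cmult: "S \<in> Rsp k \<Longrightarrow> (\<lambda>x \<xi>. r * S x \<xi>) \<in> Rsp k"
  using Rsp_lin[of S k S r 0] by simp
lemma Rsp_sum: "finite I \<Longrightarrow> (\<And>i. i \<in> I \<Longrightarrow> S i \<in> Rsp k) \<Longrightarrow> (\<lambda>x \<xi>. \<Sum>i\<in>I. S i x \<xi>) \<in> Rsp k"
  by (induction I rule: finite_induct) (auto intro: Rsp_add Rsp_zero)

lemma Rsp_xmult: "S \<in> Rsp k \<Longrightarrow> (\<lambda>x \<xi>. x $ a * S x \<xi>) \<in> Rsp k"
  by (simp add: Rsp_iff hom_poly_cmult sm_mult sm_x)

lemma Rsp_ximult: "S \<in> Rsp k \<Longrightarrow> (\<lambda>x \<xi>. \<xi> $ a * S x \<xi>) \<in> Rsp (Suc k)"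
  by (simp add: Rsp_iff hom_poly_xi sm_mult sm_xi)


lemma dx_euler:
  assumes S: "S \<in> Rsp k"
  shows "(\<Sum>l\<in>UNIV. \<xi> $ l * dx (dxi S l) a x \<xi>) = real k * dx S a x \<xi>"
proof -
  have sm: "sm S" using S by (rule Rsp_sm)
  have D1: "((\<lambda>h. \<Sum>l\<in>UNIV. \<xi> $ l * dxi S l (x + h *\<^sub>R axis a 1) \<xi>) has_real_derivative
      (\<Sum>l\<in>UNIV. \<xi> $ l * dx (dxi S l) a x \<xi>)) (at 0)"
    by (intro DERIV_sum DERIV_cmult dx_DERIV sm_dxi sm)
  have D2: "((\<lambda>h. real k * S (x + h *\<^sub>R axis a 1) \<xi>) has_real_derivative real k * dx S a x \<xi>) (at 0)"
    by (intro DERIV_cmult dx_DERIV sm)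
  have "(\<lambda>h. \<Sum>l\<in>UNIV. \<xi> $ l * dxi S l (x + h *\<^sub>R axis a 1) \<xi>) = (\<lambda>h. real k * S (x + h *\<^sub>R axis a 1) \<xi>)"
    by (intro ext Rsp_euler[OF S])
  with D1 have D1': "((\<lambda>h. real k * S (x + h *\<^sub>R axis a 1) \<xi>) has_real_derivative
      (\<Sum>l\<in>UNIV. \<xi> $ l * dx (dxi S l) a x \<xi>)) (at 0)" by simp
  show ?thesis by (rule DERIV_unique[OF D1' D2])
qed

lemma dx_const0:
  assumes S: "S \<in> Rsp 0"
  shows "dx S a x \<xi> = dx S a x \<eta>"
proof -
  have "(\<lambda>h. S (x + h *\<^sub>R axis a 1) \<xi>) = (\<lambda>h. S (x + h *\<^sub>R axis a 1) \<eta>)"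
    by (intro ext Rsp0[OF S])
  then show ?thesis by (simp add: dx_def)
qed

lemma dxi_const0:
  assumes S: "S \<in> Rsp 0"
  shows "dxi S l x \<xi> = 0"
proof -
  have "(\<lambda>h. S x (\<xi> + h *\<^sub>R axis l 1)) = (\<lambda>h. S x \<xi>)"
    by (intro ext Rsp0[OF S])
  then show ?thesis by (simp add: dxi_def)
qed

lemma Rsp_dx: "S \<in> Rsp k \<Longrightarrow> dx S a \<in> Rsp k"
proof (induction k arbitrary: S)
  case 0
  have "hom_poly 0 (dx S a x)" for x
  proof -
    have "dx S a x = (\<lambda>\<xi>. dx S a x 0)" by (intro ext dx_const0[OF 0])
    then show ?thesis using hom_poly_const by metis
  qed
  then show ?case using 0 by (simp add: Rsp_iff sm_dx)
next
  case (Suc k)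
  have e: "dx S a x = (\<lambda>\<xi>. (1 / real (Suc k)) * (\<Sum>l\<in>UNIV. \<xi> $ l * dx (dxi S l) a x \<xi>))" for x
  proof (intro ext)
    fix \<xi>
    have "(\<Sum>l\<in>UNIV. \<xi> $ l * dx (dxi S l) a x \<xi>) = real (Suc k) * dx S a x \<xi>"
      by (rule dx_euler[OF Suc.prems])
    then show "dx S a x \<xi> = (1 / real (Suc k)) * (\<Sum>l\<in>UNIV. \<xi> $ l * dx (dxi S l) a x \<xi>)"
      by (simp del: of_nat_Suc)
  qed
  have "hom_poly (Suc k) (dx S a x)" for x
    unfolding e
  proof (intro hom_poly_cmult hom_poly_sum hom_poly_xi)
    fix l
    have "dxi S l \<in> Rsp k" using Rsp_dxi[OF Suc.prems, of l] by simp
    then show "hom_poly k (dx (dxi S l) a x)" by (intro Rsp_hp Suc.IH)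
  qed simp
  then show ?case using Suc.prems by (simp add: Rsp_iff sm_dx)
qed


lemma mixed: "S \<in> Rsp k \<Longrightarrow> dxi (dx S a) l x \<xi> = dx (dxi S l) a x \<xi>"
proof (induction k arbitrary: S x \<xi>)
  case 0
  have "dxi (dx S a) l x \<xi> = 0"
    using dxi_const0[OF Rsp_dx[OF 0]] .
  moreover have "dxi S l = (\<lambda>x \<xi>. 0)" by (intro ext) (rule dxi_const0[OF 0])
  then have "dx (dxi S l) a x \<xi> = 0" by (simp add: dx_def)
  ultimately show ?case by simp
next
  case (Suc k)
  define T where "T j = dxi S j" for j
  have T: "T j \<in> Rsp k" for j unfolding T_def using Rsp_dxi[OF Suc.prems] by simp
  have e: "dx S a = (\<lambda>x \<xi>. (1 / real (Suc k)) * (\<Sum>j\<in>UNIV. \<xi> $ j * dx (T j) a x \<xi>))"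
  proof (intro ext)
    fix x \<xi>
    have "(\<Sum>j\<in>UNIV. \<xi> $ j * dx (T j) a x \<xi>) = real (Suc k) * dx S a x \<xi>"
      unfolding T_def by (rule dx_euler[OF Suc.prems])
    then show "dx S a x \<xi> = (1 / real (Suc k)) * (\<Sum>j\<in>UNIV. \<xi> $ j * dx (T j) a x \<xi>)"
      by (simp del: of_nat_Suc)
  qed
  have D: "((\<lambda>h. (1 / real (Suc k)) * (\<Sum>j\<in>UNIV. (\<xi> + h *\<^sub>R axis l 1) $ j * dx (T j) a x (\<xi> + h *\<^sub>R axis l 1))) has_real_derivative
     (1 / real (Suc k)) * (\<Sum>j\<in>UNIV. axis l 1 $ j * dx (T j) a x \<xi> + \<xi> $ j * dxi (dx (T j) a) l x \<xi>)) (at 0)"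
  proof (intro DERIV_cmult DERIV_sum)
    fix j
    show "((\<lambda>h. (\<xi> + h *\<^sub>R axis l 1) $ j * dx (T j) a x (\<xi> + h *\<^sub>R axis l 1)) has_real_derivative
       axis l 1 $ j * dx (T j) a x \<xi> + \<xi> $ j * dxi (dx (T j) a) l x \<xi>) (at 0)"
      by (rule DERIV_eqI[OF DERIV_mult[OF comp_DERIV dxi_DERIV[OF sm_dx[OF Rsp_sm[OF T]]]]]) simp
  qed
  have "\<And>j. axis l 1 $ j * dx (T j) a x \<xi> = (if j = l then dx (T j) a x \<xi> else 0)"
    by (auto simp: axis_def)
  then have s1: "(\<Sum>j\<in>UNIV. axis l 1 $ j * dx (T j) a x \<xi>) = dx (T l) a x \<xi>"
    by simp
  have "dxi (dx (T j) a) l x \<xi> = dx (dxi (T l) j) a x \<xi>" for j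
  proof -
    have "dxi (dx (T j) a) l x \<xi> = dx (dxi (T j) l) a x \<xi>" using Suc.IH[OF T] .
    moreover have "dxi (T j) l = dxi (T l) j" unfolding T_def by (intro ext Rsp_sym[OF Suc.prems])
    ultimately show ?thesis by simp
  qed
  then have s2: "(\<Sum>j\<in>UNIV. \<xi> $ j * dxi (dx (T j) a) l x \<xi>) = real k * dx (T l) a x \<xi>"
    using dx_euler[OF T[of l]] by simp
  have "dxi (dx S a) l x \<xi> = (1 / real (Suc k)) * (dx (T l) a x \<xi> + real k * dx (T l) a x \<xi>)"
    unfolding dxi_def e using DERIV_imp_deriv[OF D] s1 s2 by (simp add: sum.distrib)
  also have "\<dots> = dx (T l) a x \<xi>" by (simp add: field_simps)
  finally show ?case unfolding T_def .
qed


lemma alg_identity: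
  fixes xq xp \<xi>q \<xi>p aq ap bq bp Mqt Mpt Mtq Mtp :: "'n::finite \<Rightarrow> real"
    and Mqq Mqp Mpq Mpp :: "'n \<Rightarrow> 'n \<Rightarrow> real"
    and \<xi>t aT bt T c m Mtt :: real
  assumes euler: "(\<Sum>j\<in>UNIV. \<xi>q j * aq j) + (\<Sum>j\<in>UNIV. \<xi>p j * ap j) + \<xi>t * aT = m * T"
  defines "Esxi \<equiv> (\<Sum>j\<in>UNIV. xp j * \<xi>p j + xq j * \<xi>q j)"
    and "EsS \<equiv> (\<Sum>j\<in>UNIV. xp j * bp j + xq j * bq j)"
  shows "1/2 * ((\<Sum>i\<in>UNIV. xp i * (bp i + (\<Sum>j\<in>UNIV. \<xi>q j * Mpq j i - \<xi>p j * Mqq j i)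
                 + \<xi>t * (\<Sum>j\<in>UNIV. xp j * Mpq j i + xq j * Mqq j i) - xq i * bt - Esxi * Mtq i + c * (\<xi>t * aq i))
            - xq i * (- bq i + (\<Sum>j\<in>UNIV. \<xi>q j * Mpp j i - \<xi>p j * Mqp j i)
                 + \<xi>t * (\<Sum>j\<in>UNIV. xp j * Mpp j i + xq j * Mqp j i) - xp i * bt - Esxi * Mtp i + c * (\<xi>t * ap i)))
         - ((\<Sum>j\<in>UNIV. \<xi>q j * Mpt j - \<xi>p j * Mqt j) + EsS + \<xi>t * (\<Sum>j\<in>UNIV. xp j * Mpt j + xq j * Mqt j)
             - Esxi * Mtt + c * (T + \<xi>t * aT)))
   = (\<Sum>i\<in>UNIV. \<xi>q i * (1/2 * ((aq i + (\<Sum>j\<in>UNIV. xp j * Mpq i j - xq j * Mpp i j)) - Mpt i))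
               - \<xi>p i * (1/2 * ((- ap i + (\<Sum>j\<in>UNIV. xp j * Mqq i j - xq j * Mqp i j)) - Mqt i)))
     + \<xi>t * (\<Sum>i\<in>UNIV. xp i * (1/2 * ((aq i + (\<Sum>j\<in>UNIV. xp j * Mpq i j - xq j * Mpp i j)) - Mpt i))
               + xq i * (1/2 * ((- ap i + (\<Sum>j\<in>UNIV. xp j * Mqq i j - xq j * Mqp i j)) - Mqt i)))
     - Esxi * (1/2 * ((\<Sum>j\<in>UNIV. xp j * Mtq j - xq j * Mtp j) - Mtt))
     + (c - 1) * \<xi>t * (1/2 * ((\<Sum>j\<in>UNIV. xp j * aq j - xq j * ap j) - aT))
     - ((c + m) / 2) * T"
proof -
  have sw: "\<And>f g :: 'n \<Rightarrow> real. \<And>M. (\<Sum>i\<in>UNIV. f i * (\<Sum>j\<in>UNIV. g j * M j i)) = (\<Sum>i\<in>UNIV. g i * (\<Sum>j\<in>UNIV. f j * M i j))"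
    unfolding sum_distrib_left by (subst sum.swap) (simp add: mult_ac)
  define S1 where "S1 = (\<Sum>i\<in>UNIV. \<xi>q i * (\<Sum>j\<in>UNIV. xp j * Mpq i j))"
  define S2 where "S2 = (\<Sum>i\<in>UNIV. \<xi>p i * (\<Sum>j\<in>UNIV. xp j * Mqq i j))"
  define S3 where "S3 = (\<Sum>i\<in>UNIV. \<xi>q i * (\<Sum>j\<in>UNIV. xq j * Mpp i j))"
  define S4 where "S4 = (\<Sum>i\<in>UNIV. \<xi>p i * (\<Sum>j\<in>UNIV. xq j * Mqp i j))"
  define S5 where "S5 = (\<Sum>i\<in>UNIV. xp i * (\<Sum>j\<in>UNIV. xp j * Mpq i j))"
  define S6 where "S6 = (\<Sum>i\<in>UNIV. xq i * (\<Sum>j\<in>UNIV. xp j * Mqq i j))"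
  define S7 where "S7 = (\<Sum>i\<in>UNIV. xp i * (\<Sum>j\<in>UNIV. xq j * Mpp i j))"
  define S8 where "S8 = (\<Sum>i\<in>UNIV. xq i * (\<Sum>j\<in>UNIV. xq j * Mqp i j))"
  have S1': "S1 = (\<Sum>i\<in>UNIV. xp i * (\<Sum>j\<in>UNIV. \<xi>q j * Mpq j i))" unfolding S1_def by (rule sw[symmetric])
  have S2': "S2 = (\<Sum>i\<in>UNIV. xp i * (\<Sum>j\<in>UNIV. \<xi>p j * Mqq j i))" unfolding S2_def by (rule sw[symmetric])
  have S3': "S3 = (\<Sum>i\<in>UNIV. xq i * (\<Sum>j\<in>UNIV. \<xi>q j * Mpp j i))" unfolding S3_def by (rule sw[symmetric])
  have S4': "S4 = (\<Sum>i\<in>UNIV. xq i * (\<Sum>j\<in>UNIV. \<xi>p j * Mqp j i))" unfolding S4_def by (rule sw[symmetric])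
  have S5': "S5 = (\<Sum>i\<in>UNIV. xp i * (\<Sum>j\<in>UNIV. xp j * Mpq j i))" unfolding S5_def by (rule sw[symmetric])
  have S6': "S6 = (\<Sum>i\<in>UNIV. xp i * (\<Sum>j\<in>UNIV. xq j * Mqq j i))" unfolding S6_def by (rule sw[symmetric])
  have S7': "S7 = (\<Sum>i\<in>UNIV. xq i * (\<Sum>j\<in>UNIV. xp j * Mpp j i))" unfolding S7_def by (rule sw[symmetric])
  have S8': "S8 = (\<Sum>i\<in>UNIV. xq i * (\<Sum>j\<in>UNIV. xq j * Mqp j i))" unfolding S8_def by (rule sw[symmetric])
  define Lq where "Lq i = bp i + (\<Sum>j\<in>UNIV. \<xi>q j * Mpq j i - \<xi>p j * Mqq j i)
                 + \<xi>t * (\<Sum>j\<in>UNIV. xp j * Mpq j i + xq j * Mqq j i) - xq i * bt - Esxi * Mtq i + c * (\<xi>t * aq i)" for i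
  define Lp where "Lp i = - bq i + (\<Sum>j\<in>UNIV. \<xi>q j * Mpp j i - \<xi>p j * Mqp j i)
                 + \<xi>t * (\<Sum>j\<in>UNIV. xp j * Mpp j i + xq j * Mqp j i) - xp i * bt - Esxi * Mtp i + c * (\<xi>t * ap i)" for i
  have L: "(\<Sum>i\<in>UNIV. xp i * Lq i - xq i * Lp i) = (\<Sum>i\<in>UNIV. xp i * bp i) + (\<Sum>i\<in>UNIV. xq i * bq i)
     + (S1 - S2) - (S3 - S4) + \<xi>t * (S5 + S6 - S7 - S8) - Esxi * ((\<Sum>i\<in>UNIV. xp i * Mtq i) - (\<Sum>i\<in>UNIV. xq i * Mtp i))
     + c * \<xi>t * ((\<Sum>i\<in>UNIV. xp i * aq i) - (\<Sum>i\<in>UNIV. xq i * ap i))"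
    unfolding S1' S2' S3' S4' S5' S6' S7' S8' Lq_def Lp_def
    by (simp add: sum.distrib sum_subtractf sum_distrib_left algebra_simps)
  define Rp where "Rp i = 1/2 * ((aq i + (\<Sum>j\<in>UNIV. xp j * Mpq i j - xq j * Mpp i j)) - Mpt i)" for i
  define Rq where "Rq i = 1/2 * ((- ap i + (\<Sum>j\<in>UNIV. xp j * Mqq i j - xq j * Mqp i j)) - Mqt i)" for i
  have R1: "(\<Sum>i\<in>UNIV. \<xi>q i * Rp i - \<xi>p i * Rq i) = 1/2 * ((\<Sum>i\<in>UNIV. \<xi>q i * aq i) + (\<Sum>i\<in>UNIV. \<xi>p i * ap i)
       + (S1 - S3) - (S2 - S4) - (\<Sum>i\<in>UNIV. \<xi>q i * Mpt i) + (\<Sum>i\<in>UNIV. \<xi>p i * Mqt i))"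
    unfolding S1_def S2_def S3_def S4_def Rp_def Rq_def
    by (simp add: sum.distrib sum_subtractf sum_distrib_left algebra_simps)
  have R2: "(\<Sum>i\<in>UNIV. xp i * Rp i + xq i * Rq i) = 1/2 * ((\<Sum>i\<in>UNIV. xp i * aq i) - (\<Sum>i\<in>UNIV. xq i * ap i)
       + (S5 - S7) + (S6 - S8) - (\<Sum>i\<in>UNIV. xp i * Mpt i) - (\<Sum>i\<in>UNIV. xq i * Mqt i))"
    unfolding S5_def S6_def S7_def S8_def Rp_def Rq_def
    by (simp add: sum.distrib sum_subtractf sum_distrib_left algebra_simps)
  have E1: "Esxi = (\<Sum>j\<in>UNIV. xp j * \<xi>p j) + (\<Sum>j\<in>UNIV. xq j * \<xi>q j)" unfolding Esxi_def by (simp add: sum.distrib)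
  have E2: "EsS = (\<Sum>j\<in>UNIV. xp j * bp j) + (\<Sum>j\<in>UNIV. xq j * bq j)" unfolding EsS_def by (simp add: sum.distrib)
  have s1: "(\<Sum>j\<in>UNIV. \<xi>q j * Mpt j - \<xi>p j * Mqt j) = (\<Sum>j\<in>UNIV. \<xi>q j * Mpt j) - (\<Sum>j\<in>UNIV. \<xi>p j * Mqt j)"
    by (simp add: sum_subtractf)
  have s2: "(\<Sum>j\<in>UNIV. xp j * Mpt j + xq j * Mqt j) = (\<Sum>j\<in>UNIV. xp j * Mpt j) + (\<Sum>j\<in>UNIV. xq j * Mqt j)"
    by (simp add: sum.distrib)
  have s3: "(\<Sum>j\<in>UNIV. xp j * Mtq j - xq j * Mtp j) = (\<Sum>j\<in>UNIV. xp j * Mtq j) - (\<Sum>j\<in>UNIV. xq j * Mtp j)"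
    by (simp add: sum_subtractf)
  have s4: "(\<Sum>j\<in>UNIV. xp j * aq j - xq j * ap j) = (\<Sum>j\<in>UNIV. xp j * aq j) - (\<Sum>j\<in>UNIV. xq j * ap j)"
    by (simp add: sum_subtractf)
  show ?thesis
    unfolding Lq_def[symmetric] Lp_def[symmetric] Rp_def[symmetric] Rq_def[symmetric] L R1 R2 s1 s2 s3 s4
    unfolding E2
    using euler by algebra
qed


lemma coord_simps[simp]:
  "cq i = cq j \<longleftrightarrow> i = j" "cp i = cp j \<longleftrightarrow> i = j"
  "cq i \<noteq> cp j" "cp j \<noteq> cq i" "cq i \<noteq> ct" "ct \<noteq> cq i" "cp i \<noteq> ct" "ct \<noteq> cp i"
  by (auto simp: cq_def cp_def ct_def)

lemma sum_coords: "(\<Sum>l\<in>UNIV. (f :: 'n::finite + 'n + unit \<Rightarrow> real) l) = (\<Sum>j\<in>UNIV. f (cq j)) + (\<Sum>j\<in>UNIV. f (cp j)) + f ct"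
proof -
  have U: "(UNIV :: ('n::finite + 'n + unit) set) = UNIV <+> (UNIV <+> UNIV)" by simp
  show ?thesis unfolding U by (simp del: UNIV_Plus_UNIV add: sum.Plus cq_def cp_def ct_def o_def UNIV_unit)
qed

lemma dx_zero: "dx (\<lambda>x \<xi>. 0) a x \<xi> = 0" by (simp add: dx_def)
lemma dxi_zero: "dxi (\<lambda>x \<xi>. 0) a x \<xi> = 0" by (simp add: dxi_def)

lemma Dop_zero: "Dop (\<lambda>x \<xi>. 0) = (\<lambda>x \<xi>. 0)"
  by (intro ext) (simp add: Dop_def Es_def dx_zero)
lemma Xop_zero: "Xop \<delta> k (\<lambda>x \<xi>. 0) = (\<lambda>x \<xi>. 0)"
  by (intro ext) (simp add: Xop_def Dop_zero)
lemma ialpha_zero: "ialpha (\<lambda>x \<xi>. 0) = (\<lambda>x \<xi>. 0)"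
  by (intro ext) (simp add: ialpha_def dxi_zero)
lemma Xpow_zero: "Xpow \<delta> m l (\<lambda>x \<xi>. 0) = (\<lambda>x \<xi>. 0)"
  by (induction l) (simp_all add: Xop_zero)
lemma ialpha_pow_zero: "(ialpha ^^ l) (\<lambda>x \<xi>. 0) = (\<lambda>x \<xi>. 0)"
  by (induction l) (simp_all add: ialpha_zero)

lemma Es_eq: "Es S = (\<lambda>x \<xi>. \<Sum>j\<in>UNIV. x $ cp j * dx S (cp j) x \<xi> + x $ cq j * dx S (cq j) x \<xi>)"
  by (intro ext) (simp add: Es_def)

lemma Rsp_Es: "S \<in> Rsp k \<Longrightarrow> Es S \<in> Rsp k"
  unfolding Es_eq by (intro Rsp_sum Rsp_add Rsp_xmult Rsp_dx) auto

lemma Dop_eq: "Dop S = (\<lambda>x \<xi>. (\<Sum>j\<in>UNIV. \<xi> $ cq j * dx S (cp j) x \<xi> - \<xi> $ cp j * dx S (cq j) x \<xi>)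
    + \<xi> $ ct * Es S x \<xi> - (\<Sum>j\<in>UNIV. x $ cp j * (\<xi> $ cp j * dx S ct x \<xi>) + x $ cq j * (\<xi> $ cq j * dx S ct x \<xi>)))"
  by (intro ext) (simp add: Dop_def Es_xi_def sum_distrib_left distrib_left mult_ac)

lemma Rsp_Dop: "S \<in> Rsp k \<Longrightarrow> Dop S \<in> Rsp (Suc k)"
  unfolding Dop_eq
  by (intro Rsp_diff Rsp_add Rsp_sum Rsp_ximult Rsp_xmult Rsp_dx Rsp_Es) auto

lemma Xop_eq: "Xop \<delta> k S = (\<lambda>x \<xi>. Dop S x \<xi> + (2 * (real CARD('n) + 1) * \<delta> + real k) * (\<xi> $ ct * S x \<xi>))"
  for S :: "'n::finite pt \<Rightarrow> 'n pt \<Rightarrow> real"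
  by (intro ext) (simp add: Xop_def)

lemma Rsp_Xop: "S \<in> Rsp k \<Longrightarrow> Xop \<delta> k S \<in> Rsp (Suc k)"
  unfolding Xop_eq by (intro Rsp_add Rsp_cmult Rsp_Dop Rsp_ximult)

lemma ialpha_eq: "ialpha S = (\<lambda>x \<xi>. (1/2) * ((\<Sum>j\<in>UNIV. x $ cp j * dxi S (cq j) x \<xi> - x $ cq j * dxi S (cp j) x \<xi>) - dxi S ct x \<xi>))"
  by (intro ext) (simp add: ialpha_def)

lemma Rsp_ialpha: "S \<in> Rsp k \<Longrightarrow> ialpha S \<in> Rsp (k - 1)"
  unfolding ialpha_eq by (intro Rsp_cmult Rsp_diff Rsp_sum Rsp_xmult Rsp_dxi) auto

lemma ialpha_Rsp0: "S \<in> Rsp 0 \<Longrightarrow> ialpha S = (\<lambda>x \<xi>. 0)"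
  by (intro ext) (simp add: ialpha_def dxi_const0)

lemma Rsp_Xpow: "S \<in> Rsp m \<Longrightarrow> Xpow \<delta> m l S \<in> Rsp (m + l)"
proof (induction l)
  case (Suc l)
  have "Xop \<delta> (m + l) (Xpow \<delta> m l S) \<in> Rsp (Suc (m + l))" by (rule Rsp_Xop[OF Suc.IH[OF Suc.prems]])
  then show ?case by simp
qed simp

lemma Rsp_ialpha_pow: "S \<in> Rsp k \<Longrightarrow> (ialpha ^^ l) S \<in> Rsp (k - l)"
proof (induction l)
  case 0 then show ?case by simp
next
  case (Suc l)
  have "ialpha ((ialpha ^^ l) S) \<in> Rsp (k - l - 1)" by (rule Rsp_ialpha[OF Suc.IH[OF Suc.prems]])
  moreover have "k - l - 1 = k - Suc l" by simp
  ultimately show ?case by simp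
qed


lemma dx_lin: "sm S \<Longrightarrow> sm T \<Longrightarrow> dx (\<lambda>x \<xi>. S x \<xi> + r * T x \<xi>) a x \<xi> = dx S a x \<xi> + r * dx T a x \<xi>"
  unfolding dx_def[of "\<lambda>x \<xi>. S x \<xi> + r * T x \<xi>"]
  by (intro DERIV_imp_deriv DERIV_add DERIV_cmult dx_DERIV)

lemma dxi_lin_sum:
  assumes "finite L" "sm S" "\<And>l. l \<in> L \<Longrightarrow> sm (W l)"
  shows "dxi (\<lambda>x \<xi>. S x \<xi> + (\<Sum>l\<in>L. c l * W l x \<xi>)) i x \<xi> = dxi S i x \<xi> + (\<Sum>l\<in>L. c l * dxi (W l) i x \<xi>)"
  unfolding dxi_def[of "\<lambda>x \<xi>. S x \<xi> + (\<Sum>l\<in>L. c l * W l x \<xi>)"]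
  using assms by (intro DERIV_imp_deriv DERIV_add DERIV_sum DERIV_cmult dxi_DERIV) auto

lemma Xop_lin:
  assumes "sm S" "sm T"
  shows "Xop \<delta> k (\<lambda>x \<xi>. S x \<xi> + r * T x \<xi>) = (\<lambda>x \<xi>. Xop \<delta> k S x \<xi> + r * Xop \<delta> k T x \<xi>)"
proof (intro ext)
  fix x \<xi>
  show "Xop \<delta> k (\<lambda>x \<xi>. S x \<xi> + r * T x \<xi>) x \<xi> = Xop \<delta> k S x \<xi> + r * Xop \<delta> k T x \<xi>"
    unfolding Xop_def Dop_def Es_def dx_lin[OF assms]
    by (simp add: algebra_simps sum.distrib sum_subtractf sum_distrib_left)
qed

lemma ialpha_lin_sum:
  assumes "finite L" "sm S" "\<And>l. l \<in> L \<Longrightarrow> sm (W l)"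
  shows "ialpha (\<lambda>x \<xi>. S x \<xi> + (\<Sum>l\<in>L. c l * W l x \<xi>)) x \<xi> = ialpha S x \<xi> + (\<Sum>l\<in>L. c l * ialpha (W l) x \<xi>)"
  by (simp add: ialpha_def dxi_lin_sum[OF assms] algebra_simps sum.distrib sum_subtractf sum_distrib_left sum_divide_distrib sum.swap[where A=UNIV and B=L])


lemma ifm: "(if P then (1::real) else 0) * a = (if P then a else 0)" "a * (if P then (1::real) else 0) = (if P then a else 0)" by simp_all

lemma comm:
  fixes T :: "'n::finite pt \<Rightarrow> 'n pt \<Rightarrow> real"
  assumes T: "T \<in> Rsp m"
  shows "ialpha (Xop \<delta> m T) x \<xi> = Dop (ialpha T) x \<xi> + (2 * (real CARD('n) + 1) * \<delta> + real m - 1) * (\<xi> $ ct * ialpha T x \<xi>)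
           - ((real CARD('n) + 1) * \<delta> + real m) * T x \<xi>"
proof -
  have smT: "sm T" using T by (rule Rsp_sm)
  have smdx: "sm (dx T a)" for a using smT by (rule sm_dx)
  have smdxi: "sm (dxi T a)" for a using smT by (rule sm_dxi)
  define c where "c = 2 * (real CARD('n) + 1) * \<delta> + real m"
  define M where "M a l = dx (dxi T l) a x \<xi>" for a l
  have mix: "dxi (dx T a) l x \<xi> = M a l" for a l unfolding M_def by (rule mixed[OF T])
  define EE where "EE l = (\<Sum>j\<in>UNIV. (axis l 1 $ cq j * dx T (cp j) x \<xi> + \<xi> $ cq j * M (cp j) l) - (axis l 1 $ cp j * dx T (cq j) x \<xi> + \<xi> $ cp j * M (cq j) l))
     + (axis l 1 $ ct * (\<Sum>j\<in>UNIV. x $ cp j * dx T (cp j) x \<xi> + x $ cq j * dx T (cq j) x \<xi>) + \<xi> $ ct * (\<Sum>j\<in>UNIV. x $ cp j * M (cp j) l + x $ cq j * M (cq j) l))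
     - ((\<Sum>j\<in>UNIV. x $ cp j * axis l 1 $ cp j + x $ cq j * axis l 1 $ cq j) * dx T ct x \<xi> + (\<Sum>j\<in>UNIV. x $ cp j * \<xi> $ cp j + x $ cq j * \<xi> $ cq j) * M ct l)
     + c * (axis l 1 $ ct * T x \<xi> + \<xi> $ ct * dxi T l x \<xi>)" for l
  have DX: "((\<lambda>h. Xop \<delta> m T x (\<xi> + h *\<^sub>R axis l 1)) has_real_derivative EE l) (at 0)" for l
    unfolding Xop_def Dop_def Es_def Es_xi_def
    apply (rule DERIV_eqI)
     apply ((rule DERIV_add DERIV_diff DERIV_mult DERIV_sum DERIV_const comp_DERIV dxi_DERIV[OF smT] dxi_DERIV[OF smdx])+)[1]
    apply (simp add: EE_def mix c_def algebra_simps sum.distrib sum_subtractf)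
    done
  have dX: "dxi (Xop \<delta> m T) l x \<xi> = EE l" for l
    unfolding dxi_def by (rule DERIV_imp_deriv[OF DX])
  have EEq: "EE (cq i) = dx T (cp i) x \<xi> + (\<Sum>j\<in>UNIV. \<xi> $ cq j * M (cp j) (cq i) - \<xi> $ cp j * M (cq j) (cq i)) + \<xi> $ ct * (\<Sum>j\<in>UNIV. x $ cp j * M (cp j) (cq i) + x $ cq j * M (cq j) (cq i)) - x $ cq i * dx T ct x \<xi> - (\<Sum>j\<in>UNIV. x $ cp j * \<xi> $ cp j + x $ cq j * \<xi> $ cq j) * M ct (cq i) + c * (\<xi> $ ct * dxi T (cq i) x \<xi>)" for i
    by (simp add: EE_def axis_def ifm sum.distrib sum_subtractf algebra_simps)
  have EEp: "EE (cp i) = - dx T (cq i) x \<xi> + (\<Sum>j\<in>UNIV. \<xi> $ cq j * M (cp j) (cp i) - \<xi> $ cp j * M (cq j) (cp i)) + \<xi> $ ct * (\<Sum>j\<in>UNIV. x $ cp j * M (cp j) (cp i) + x $ cq j * M (cq j) (cp i)) - x $ cp i * dx T ct x \<xi> - (\<Sum>j\<in>UNIV. x $ cp j * \<xi> $ cp j + x $ cq j * \<xi> $ cq j) * M ct (cp i) + c * (\<xi> $ ct * dxi T (cp i) x \<xi>)" for i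
    by (simp add: EE_def axis_def ifm sum.distrib sum_subtractf algebra_simps)
  have EEt: "EE ct = (\<Sum>j\<in>UNIV. \<xi> $ cq j * M (cp j) ct - \<xi> $ cp j * M (cq j) ct) + (\<Sum>j\<in>UNIV. x $ cp j * dx T (cp j) x \<xi> + x $ cq j * dx T (cq j) x \<xi>) + \<xi> $ ct * (\<Sum>j\<in>UNIV. x $ cp j * M (cp j) ct + x $ cq j * M (cq j) ct) - (\<Sum>j\<in>UNIV. x $ cp j * \<xi> $ cp j + x $ cq j * \<xi> $ cq j) * M ct ct + c * (T x \<xi> + \<xi> $ ct * dxi T ct x \<xi>)"
    by (simp add: EE_def axis_def ifm sum.distrib sum_subtractf algebra_simps)
  have euler: "(\<Sum>j\<in>UNIV. \<xi> $ cq j * dxi T (cq j) x \<xi>) + (\<Sum>j\<in>UNIV. \<xi> $ cp j * dxi T (cp j) x \<xi>) + \<xi> $ ct * dxi T ct x \<xi> = real m * T x \<xi>"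
    using Rsp_euler[OF T, of \<xi> x] unfolding sum_coords .
  have A: "ialpha (Xop \<delta> m T) x \<xi> = (\<Sum>i\<in>UNIV. \<xi> $ cq i * (1/2 * ((dxi T (cq i) x \<xi> + (\<Sum>j\<in>UNIV. x $ cp j * M (cp i) (cq j) - x $ cq j * M (cp i) (cp j))) - M (cp i) ct))
               - \<xi> $ cp i * (1/2 * ((- dxi T (cp i) x \<xi> + (\<Sum>j\<in>UNIV. x $ cp j * M (cq i) (cq j) - x $ cq j * M (cq i) (cp j))) - M (cq i) ct)))
     + \<xi> $ ct * (\<Sum>i\<in>UNIV. x $ cp i * (1/2 * ((dxi T (cq i) x \<xi> + (\<Sum>j\<in>UNIV. x $ cp j * M (cp i) (cq j) - x $ cq j * M (cp i) (cp j))) - M (cp i) ct))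
               + x $ cq i * (1/2 * ((- dxi T (cp i) x \<xi> + (\<Sum>j\<in>UNIV. x $ cp j * M (cq i) (cq j) - x $ cq j * M (cq i) (cp j))) - M (cq i) ct)))
     - (\<Sum>j\<in>UNIV. x $ cp j * \<xi> $ cp j + x $ cq j * \<xi> $ cq j) * (1/2 * ((\<Sum>j\<in>UNIV. x $ cp j * M ct (cq j) - x $ cq j * M ct (cp j)) - M ct ct))
     + (c - 1) * \<xi> $ ct * (1/2 * ((\<Sum>j\<in>UNIV. x $ cp j * dxi T (cq j) x \<xi> - x $ cq j * dxi T (cp j) x \<xi>) - dxi T ct x \<xi>))
     - ((c + real m) / 2) * T x \<xi>"
    unfolding ialpha_def dX EEq EEp EEt
    by (rule alg_identity[OF euler])
  define DU where "DU a = 1/2 * ((\<Sum>j\<in>UNIV. (axis a 1 $ cp j * dxi T (cq j) x \<xi> + x $ cp j * M a (cq j)) - (axis a 1 $ cq j * dxi T (cp j) x \<xi> + x $ cq j * M a (cp j))) - M a ct)" for a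
  have DUd: "((\<lambda>h. ialpha T (x + h *\<^sub>R axis a 1) \<xi>) has_real_derivative DU a) (at 0)" for a
    unfolding ialpha_def
    apply (rule DERIV_eqI)
     apply ((rule DERIV_add DERIV_diff DERIV_mult DERIV_sum DERIV_const comp_DERIV dx_DERIV[OF smdxi])+)[1]
    apply (simp add: DU_def M_def algebra_simps sum.distrib sum_subtractf)
    done
  have dU: "dx (ialpha T) a x \<xi> = DU a" for a
    unfolding dx_def by (rule DERIV_imp_deriv[OF DUd])
  have DUp: "DU (cp i) = 1/2 * ((dxi T (cq i) x \<xi> + (\<Sum>j\<in>UNIV. x $ cp j * M (cp i) (cq j) - x $ cq j * M (cp i) (cp j))) - M (cp i) ct)" for i
    by (simp add: DU_def axis_def ifm sum.distrib sum_subtractf algebra_simps)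
  have DUq: "DU (cq i) = 1/2 * ((- dxi T (cp i) x \<xi> + (\<Sum>j\<in>UNIV. x $ cp j * M (cq i) (cq j) - x $ cq j * M (cq i) (cp j))) - M (cq i) ct)" for i
    by (simp add: DU_def axis_def ifm sum.distrib sum_subtractf algebra_simps)
  have DUt: "DU ct = 1/2 * ((\<Sum>j\<in>UNIV. x $ cp j * M ct (cq j) - x $ cq j * M ct (cp j)) - M ct ct)"
    by (simp add: DU_def axis_def ifm sum.distrib sum_subtractf algebra_simps)
  have B: "Dop (ialpha T) x \<xi> + (2 * (real CARD('n) + 1) * \<delta> + real m - 1) * (\<xi> $ ct * ialpha T x \<xi>)
           - ((real CARD('n) + 1) * \<delta> + real m) * T x \<xi> = (\<Sum>i\<in>UNIV. \<xi> $ cq i * (1/2 * ((dxi T (cq i) x \<xi> + (\<Sum>j\<in>UNIV. x $ cp j * M (cp i) (cq j) - x $ cq j * M (cp i) (cp j))) - M (cp i) ct))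
               - \<xi> $ cp i * (1/2 * ((- dxi T (cp i) x \<xi> + (\<Sum>j\<in>UNIV. x $ cp j * M (cq i) (cq j) - x $ cq j * M (cq i) (cp j))) - M (cq i) ct)))
     + \<xi> $ ct * (\<Sum>i\<in>UNIV. x $ cp i * (1/2 * ((dxi T (cq i) x \<xi> + (\<Sum>j\<in>UNIV. x $ cp j * M (cp i) (cq j) - x $ cq j * M (cp i) (cp j))) - M (cp i) ct))
               + x $ cq i * (1/2 * ((- dxi T (cp i) x \<xi> + (\<Sum>j\<in>UNIV. x $ cp j * M (cq i) (cq j) - x $ cq j * M (cq i) (cp j))) - M (cq i) ct)))
     - (\<Sum>j\<in>UNIV. x $ cp j * \<xi> $ cp j + x $ cq j * \<xi> $ cq j) * (1/2 * ((\<Sum>j\<in>UNIV. x $ cp j * M ct (cq j) - x $ cq j * M ct (cp j)) - M ct ct))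
     + (c - 1) * \<xi> $ ct * (1/2 * ((\<Sum>j\<in>UNIV. x $ cp j * dxi T (cq j) x \<xi> - x $ cq j * dxi T (cp j) x \<xi>) - dxi T ct x \<xi>))
     - ((c + real m) / 2) * T x \<xi>"
  proof -
    have h1: "(real CARD('n) + 1) * \<delta> + real m = (c + real m) / 2" by (simp add: c_def field_simps)
    have h2: "2 * (real CARD('n) + 1) * \<delta> + real m - 1 = c - 1" by (simp add: c_def)
    show ?thesis
      unfolding h1 h2 Dop_def Es_def Es_xi_def dU DUp DUq DUt
      by (simp add: ialpha_def mult.assoc)
  qed
  show ?thesis using A B by simp
qed


lemma comm_fun:
  fixes T :: "'n::finite pt \<Rightarrow> 'n pt \<Rightarrow> real"
  assumes T: "T \<in> Rsp m"
  shows "ialpha (Xop \<delta> m T) = (\<lambda>x \<xi>. Xop \<delta> (m - 1) (ialpha T) x \<xi> + (- ((real CARD('n) + 1) * \<delta> + real m)) * T x \<xi>)"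
proof (intro ext)
  fix x \<xi>
  show "ialpha (Xop \<delta> m T) x \<xi> = Xop \<delta> (m - 1) (ialpha T) x \<xi> + (- ((real CARD('n) + 1) * \<delta> + real m)) * T x \<xi>"
  proof (cases m)
    case 0
    have z: "ialpha T = (\<lambda>x \<xi>. 0)" using T 0 by (simp add: ialpha_Rsp0)
    show ?thesis unfolding comm[OF T] z Xop_zero Dop_zero using 0 by simp
  next
    case (Suc m')
    then show ?thesis unfolding comm[OF T] by (simp add: Xop_def algebra_simps)
  qed
qed

lemma sm_Xpow: "T \<in> Rsp m \<Longrightarrow> sm (Xpow \<delta> m l T)"
  using Rsp_Xpow Rsp_sm by blast

lemma comm_pow:
  fixes T :: "'n::finite pt \<Rightarrow> 'n pt \<Rightarrow> real"
  assumes T: "T \<in> Rsp m" and l: "1 \<le> l"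
  shows "ialpha (Xpow \<delta> m l T) = (\<lambda>x \<xi>. Xpow \<delta> (m - 1) l (ialpha T) x \<xi> + rr CARD('n) \<delta> (real l) (real m) * Xpow \<delta> m (l - 1) T x \<xi>)"
  using l
proof (induction l rule: nat_induct_at_least)
  case base
  show ?case using comm_fun[OF T] by (simp add: rr_def algebra_simps)
next
  case (Suc l)
  define W where "W = Xpow \<delta> m l T"
  have W: "W \<in> Rsp (m + l)" unfolding W_def by (rule Rsp_Xpow[OF T])
  have iT: "ialpha T \<in> Rsp (m - 1)" by (rule Rsp_ialpha[OF T])
  have e1: "Xpow \<delta> m (Suc l) T = Xop \<delta> (m + l) W" by (simp add: W_def)
  have e2: "Xop \<delta> (m + l - 1) (Xpow \<delta> (m - 1) l (ialpha T)) = Xpow \<delta> (m - 1) (Suc l) (ialpha T)"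
  proof (cases m)
    case 0
    then have "ialpha T = (\<lambda>x \<xi>. 0)" using T by (simp add: ialpha_Rsp0)
    then show ?thesis by (simp add: Xpow_zero Xop_zero)
  next
    case (Suc m')
    then show ?thesis by simp
  qed
  have e3: "Xop \<delta> (m + l - 1) (Xpow \<delta> m (l - 1) T) = Xpow \<delta> m l T"
  proof -
    obtain l' where "l = Suc l'" using Suc.hyps by (cases l) auto
    then show ?thesis by simp
  qed
  have "ialpha (Xpow \<delta> m (Suc l) T) = (\<lambda>x \<xi>. Xop \<delta> (m + l - 1) (ialpha W) x \<xi> + (- ((real CARD('n) + 1) * \<delta> + real (m + l))) * W x \<xi>)"
    unfolding e1 comm_fun[OF W] ..
  also have "ialpha W = (\<lambda>x \<xi>. Xpow \<delta> (m - 1) l (ialpha T) x \<xi> + rr CARD('n) \<delta> (real l) (real m) * Xpow \<delta> m (l - 1) T x \<xi>)"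
    unfolding W_def by (rule Suc.IH)
  also have "Xop \<delta> (m + l - 1) (\<lambda>x \<xi>. Xpow \<delta> (m - 1) l (ialpha T) x \<xi> + rr CARD('n) \<delta> (real l) (real m) * Xpow \<delta> m (l - 1) T x \<xi>)
      = (\<lambda>x \<xi>. Xop \<delta> (m + l - 1) (Xpow \<delta> (m - 1) l (ialpha T)) x \<xi> + rr CARD('n) \<delta> (real l) (real m) * Xop \<delta> (m + l - 1) (Xpow \<delta> m (l - 1) T) x \<xi>)"
    by (rule Xop_lin[OF sm_Xpow[OF iT] sm_Xpow[OF T]])
  finally show ?case unfolding e2 e3 W_def
    by (intro ext) (simp add: rr_def field_simps)
qed

lemma tele: "(\<Sum>l\<in>{1..n}. f l - f (l - 1)) = f n - (f 0 :: real)" for n :: nat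
  by (induction n) (simp_all add: sum.cl_ivl_Suc)

lemma pk_eq: "pk \<delta> k S = (\<lambda>x \<xi>. S x \<xi> + (\<Sum>l\<in>{1..k}. bb CARD('n) \<delta> k l * Xpow \<delta> (k - l) l ((ialpha ^^ l) S) x \<xi>))"
  for S :: "'n::finite pt \<Rightarrow> 'n pt \<Rightarrow> real"
  by (intro ext) (simp add: pk_def)

lemma pk_ker: "ialpha T = (\<lambda>x \<xi>. 0) \<Longrightarrow> pk \<delta> k T = T"
proof -
  assume h: "ialpha T = (\<lambda>x \<xi>. 0)"
  have "(ialpha ^^ l) T = (\<lambda>x \<xi>. 0)" if lk: "l \<in> {1..k}" for l
  proof -
    obtain l' where "l = Suc l'" using lk by (cases l) auto
    then show ?thesis by (simp add: funpow_Suc_right h ialpha_pow_zero del: funpow.simps)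
  qed
  then show ?thesis unfolding pk_eq by (simp add: Xpow_zero)
qed

lemma Rsp_pk: "S \<in> Rsp k \<Longrightarrow> pk \<delta> k S \<in> Rsp k"
  unfolding pk_eq
proof (intro Rsp_add Rsp_sum Rsp_cmult)
  fix l assume S: "S \<in> Rsp k" and l: "l \<in> {1..k}"
  have "Xpow \<delta> (k - l) l ((ialpha ^^ l) S) \<in> Rsp (k - l + l)" by (rule Rsp_Xpow[OF Rsp_ialpha_pow[OF S]])
  then show "Xpow \<delta> (k - l) l ((ialpha ^^ l) S) \<in> Rsp k" using l by simp
qed auto


lemma rr_nz:
  assumes k: "k \<ge> 1"
    and d: "\<delta> \<notin> {- real p / (2 * (real N + 1)) | p. k - 1 \<le> p \<and> p \<le> 2 * k - 2}"
    and j: "j \<in> {1..k}"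
  shows "rr N \<delta> (real j) (real k - real j) \<noteq> 0"
proof
  assume h: "rr N \<delta> (real j) (real k - real j) = 0"
  define p where "p = 2 * k - j - 1"
  have jk: "1 \<le> j" "j \<le> k" using j by auto
  have p1: "k - 1 \<le> p" "p \<le> 2 * k - 2" using jk unfolding p_def by auto
  have rp: "real p = 2 * real k - real j - 1" using jk unfolding p_def by (simp add: of_nat_diff)
  have "2 * (real N + 1) * \<delta> + 2 * (real k - real j) + real j - 1 = 0"
    using h jk unfolding rr_def by simp
  then have "\<delta> = - real p / (2 * (real N + 1))"
    unfolding rp by (simp add: field_simps)
  then show False using d p1 by blast
qed

lemma bb_step:
  assumes nz: "rr N \<delta> (real l) (real k - real l) \<noteq> 0" and l: "1 \<le> l"
  shows "bb N \<delta> k l * rr N \<delta> (real l) (real k - real l) = - bb N \<delta> k (l - 1)"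
proof -
  obtain l' where l': "l = Suc l'" using l by (cases l) auto
  have "(\<Prod>j\<in>{1..l}. - rr N \<delta> (real j) (real k - real j)) =
        (\<Prod>j\<in>{1..l'}. - rr N \<delta> (real j) (real k - real j)) * (- rr N \<delta> (real l) (real k - real l))"
    unfolding l' by (simp add: prod.cl_ivl_Suc)
  then show ?thesis using nz unfolding bb_def l'
    by (simp add: field_simps)
qed

lemma bb0: "bb N \<delta> k 0 = 1" by (simp add: bb_def)

lemma ialpha_pk:
  fixes S :: "'n::finite pt \<Rightarrow> 'n pt \<Rightarrow> real"
  assumes S: "S \<in> Rsp k" and nz: "\<forall>j\<in>{1..k}. rr CARD('n) \<delta> (real j) (real k - real j) \<noteq> 0"
  shows "ialpha (pk \<delta> k S) = (\<lambda>x \<xi>. 0)"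
proof (intro ext)
  fix x \<xi>
  let ?N = "CARD('n)"
  define W where "W l = Xpow \<delta> (k - l) l ((ialpha ^^ l) S)" for l
  have Wr: "W l \<in> Rsp k" if "l \<in> {1..k}" for l
  proof -
    have "W l \<in> Rsp (k - l + l)" unfolding W_def by (rule Rsp_Xpow[OF Rsp_ialpha_pow[OF S]])
    then show ?thesis using that by simp
  qed
  have i1: "ialpha (pk \<delta> k S) x \<xi> = ialpha S x \<xi> + (\<Sum>l\<in>{1..k}. bb ?N \<delta> k l * ialpha (W l) x \<xi>)"
    unfolding pk_eq W_def[symmetric]
    by (rule ialpha_lin_sum) (auto intro: Rsp_sm[OF S] Rsp_sm[OF Wr])
  define u where "u l = bb ?N \<delta> k l * Xpow \<delta> (k - l - 1) l ((ialpha ^^ Suc l) S) x \<xi>" for l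
  have trm: "bb ?N \<delta> k l * ialpha (W l) x \<xi> = u l - u (l - 1)" if l: "l \<in> {1..k}" for l
  proof -
    obtain l' where l': "l = Suc l'" using l by (cases l) auto
    have T: "(ialpha ^^ l) S \<in> Rsp (k - l)" by (rule Rsp_ialpha_pow[OF S])
    have c: "ialpha (W l) x \<xi> = Xpow \<delta> (k - l - 1) l ((ialpha ^^ Suc l) S) x \<xi>
        + rr ?N \<delta> (real l) (real (k - l)) * Xpow \<delta> (k - l) (l - 1) ((ialpha ^^ l) S) x \<xi>"
    proof -
      have l1: "1 \<le> l" using l by simp
      show ?thesis unfolding W_def comm_pow[OF T l1] by simp
    qed
    have rk: "real (k - l) = real k - real l" using l by (simp add: of_nat_diff)
    have b: "bb ?N \<delta> k l * rr ?N \<delta> (real l) (real k - real l) = - bb ?N \<delta> k (l - 1)"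
      by (rule bb_step) (use nz l in auto)
    have u1: "u (l - 1) = bb ?N \<delta> k (l - 1) * Xpow \<delta> (k - l) (l - 1) ((ialpha ^^ l) S) x \<xi>"
      unfolding u_def l' by simp
    show ?thesis unfolding c rk u1 unfolding u_def
      by (simp add: distrib_left mult.assoc[symmetric] b)
  qed
  have "(\<Sum>l\<in>{1..k}. bb ?N \<delta> k l * ialpha (W l) x \<xi>) = (\<Sum>l\<in>{1..k}. u l - u (l - 1))"
    by (intro sum.cong refl trm)
  also have "\<dots> = u k - u 0" by (rule tele)
  also have "u 0 = ialpha S x \<xi>" by (simp add: u_def bb0)
  also have "u k = 0"
  proof -
    have "(ialpha ^^ k) S \<in> Rsp 0" using Rsp_ialpha_pow[OF S, of k] by simp
    then have "(ialpha ^^ Suc k) S = (\<lambda>x \<xi>. 0)" by (simp add: ialpha_Rsp0)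
    then show ?thesis unfolding u_def by (simp add: Xpow_zero)
  qed
  finally show "ialpha (pk \<delta> k S) x \<xi> = 0" unfolding i1 by simp
qed

theorem proposition5p1:
  fixes \<delta> :: real and k :: nat
  assumes "k \<ge> 1"
    and "\<delta> \<notin> {- real p / (2 * (real CARD('n::finite) + 1)) | p. k - 1 \<le> p \<and> p \<le> 2 * k - 2}"
  shows "(\<forall>j\<in>{1..k}. rr CARD('n) \<delta> (real j) (real k - real j) \<noteq> 0)
       \<and> (\<forall>S\<in>(Rsp k :: ('n pt \<Rightarrow> 'n pt \<Rightarrow> real) set). pk \<delta> k S \<in> Rsp k)
       \<and> (\<forall>S\<in>(Rsp k :: ('n pt \<Rightarrow> 'n pt \<Rightarrow> real) set). pk \<delta> k (pk \<delta> k S) = pk \<delta> k S)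
       \<and> pk \<delta> k ` (Rsp k :: ('n pt \<Rightarrow> 'n pt \<Rightarrow> real) set) = {S \<in> Rsp k. ialpha S = (\<lambda>x \<xi>. 0)}
       \<and> (\<forall>S\<in>(Rsp k :: ('n pt \<Rightarrow> 'n pt \<Rightarrow> real) set). ialpha (pk \<delta> k S) = (\<lambda>x \<xi>. 0))"
proof -
  have nz: "\<forall>j\<in>{1..k}. rr CARD('n) \<delta> (real j) (real k - real j) \<noteq> 0"
    using rr_nz[OF assms] by blast
  have ker: "\<forall>S\<in>(Rsp k :: ('n pt \<Rightarrow> 'n pt \<Rightarrow> real) set). ialpha (pk \<delta> k S) = (\<lambda>x \<xi>. 0)"
    using ialpha_pk nz by blast
  have cl: "\<forall>S\<in>(Rsp k :: ('n pt \<Rightarrow> 'n pt \<Rightarrow> real) set). pk \<delta> k S \<in> Rsp k"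
    using Rsp_pk by blast
  have idem: "\<forall>S\<in>(Rsp k :: ('n pt \<Rightarrow> 'n pt \<Rightarrow> real) set). pk \<delta> k (pk \<delta> k S) = pk \<delta> k S"
    using ker pk_ker by blast
  have img: "pk \<delta> k ` (Rsp k :: ('n pt \<Rightarrow> 'n pt \<Rightarrow> real) set) = {S \<in> Rsp k. ialpha S = (\<lambda>x \<xi>. 0)}"
  proof
    show "pk \<delta> k ` (Rsp k :: ('n pt \<Rightarrow> 'n pt \<Rightarrow> real) set) \<subseteq> {S \<in> Rsp k. ialpha S = (\<lambda>x \<xi>. 0)}" using ker cl by auto
  next
    show "{S \<in> Rsp k. ialpha S = (\<lambda>x \<xi>. 0)} \<subseteq> pk \<delta> k ` (Rsp k :: ('n pt \<Rightarrow> 'n pt \<Rightarrow> real) set)"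
    proof
      fix S :: "'n pt \<Rightarrow> 'n pt \<Rightarrow> real"
      assume "S \<in> {S \<in> Rsp k. ialpha S = (\<lambda>x \<xi>. 0)}"
      then have "S \<in> Rsp k" "pk \<delta> k S = S" using pk_ker by auto
      then show "S \<in> pk \<delta> k ` Rsp k" by (metis image_eqI)
    qed
  qed
  show ?thesis using nz cl idem img ker by blast
qed


end
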